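(* Let $H$ be a Hilbert space and $W(\cdot)$ denote numerical range. (i) For $T,S\in\mathcal{L}(H)$, $\mathfrak{d}(\overline{W(T)},\overline{W(S)})\le\|T-S\|$. (ii) If $H_1\subset H_2\subset\cdots\subset H$ are nonzero closed subspaces with $\overline{\bigcup_nH_n}=H$, then for every $T\in\mathcal{L}(H)$, $\overline{W(T)}=\overline{\bigcup_nW(P_{H_n}T|_{H_n})}$; in particular $\mathfrak{d}(\overline{W(P_{H_n}T|_{H_n})},\overline{W(T)})\to0$. (iii) If $T\in\mathcal{L}(H)$ and $P,Q$ are nonzero orthogonal projections on $H$ with $\|P-Q\|<1$, then \[ \mathfrak{d}\big(\overline{W(PTP|_{PH})},\overline{W(QTQ|_{QH})}\big)\le\|T\|\,\|P-Q\|\Big[1+\frac{2}{(1-\|P-Q\|)^2}\Big]. \] In particular, if $P_n,P$ are nonzero orthogonal projections with $\|P_n-P\|\to0$, then $\mathfrak{d}(\overline{W(P_nTP_n|_{P_nH})},\overline{W(PTP|_{PH})})\to0$.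
   Context: The numerical range of $T\in\mathcal{L}(H)$ is $W(T)=\{\langle Tx,x\rangle:\|x\|=1\}$. $\mathfrak{d}$ denotes the Hausdorff distance between nonempty compact subsets of $\mathbb{C}$. *)

theory Defs
  imports "HOL-Analysis.Analysis"
begin

text \<open>HOL-Analysis only has real inner product spaces, so a complex
inner product space is introduced as a type class on top of a real normed
vector space: a complex scalar multiplication compatible with the real one,
and a complex inner product (linear in the first argument, conjugate
symmetric, positive) inducing the norm.\<close>

class complex_inner_space = real_normed_vector +
  fixes cscale :: "complex \<Rightarrow> 'a \<Rightarrow> 'a"
    and cinner :: "'a \<Rightarrow> 'a \<Rightarrow> complex"
  assumes cscale_add_right: "cscale a (x + y) = cscale a x + cscale a y"
    and cscale_add_left: "cscale (a + b) x = cscale a x + cscale b x"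
    and cscale_cscale: "cscale a (cscale b x) = cscale (a * b) x"
    and cscale_one: "cscale 1 x = x"
    and cscale_of_real: "cscale (complex_of_real r) x = scaleR r x"
    and cinner_commute: "cinner x y = cnj (cinner y x)"
    and cinner_add_left: "cinner (x + y) z = cinner x z + cinner y z"
    and cinner_cscale_left: "cinner (cscale a x) y = a * cinner x y"
    and cinner_self_nonneg: "0 \<le> Re (cinner x x)"
    and norm_eq_sqrt_cinner: "norm x = sqrt (Re (cinner x x))"

class complex_hilbert_space = complex_inner_space + complete_space

definition clinear :: "('a::complex_inner_space \<Rightarrow> 'a) \<Rightarrow> bool" where
  "clinear T \<longleftrightarrow> (\<forall>x y. T (x + y) = T x + T y) \<and> (\<forall>a x. T (cscale a x) = cscale a (T x))"

definition bounded_op :: "('a::complex_inner_space \<Rightarrow> 'a) \<Rightarrow> bool" where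
  "bounded_op T \<longleftrightarrow> clinear T \<and> (\<exists>K. \<forall>x. norm (T x) \<le> K * norm x)"

definition closed_csubspace :: "'a::complex_inner_space set \<Rightarrow> bool" where
  "closed_csubspace M \<longleftrightarrow> 0 \<in> M \<and> (\<forall>x\<in>M. \<forall>y\<in>M. x + y \<in> M)
      \<and> (\<forall>a. \<forall>x\<in>M. cscale a x \<in> M) \<and> closed M"

definition proj_onto :: "'a::complex_inner_space set \<Rightarrow> 'a \<Rightarrow> 'a" where
  "proj_onto M x = (THE y. y \<in> M \<and> (\<forall>z\<in>M. cinner (x - y) z = 0))"

definition orth_projection :: "('a::complex_inner_space \<Rightarrow> 'a) \<Rightarrow> bool" where
  "orth_projection P \<longleftrightarrow> bounded_op P \<and> (\<forall>x. P (P x) = P x)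
      \<and> (\<forall>x y. cinner (P x) y = cinner x (P y))"

definition numrange_on :: "'a::complex_inner_space set \<Rightarrow> ('a \<Rightarrow> 'a) \<Rightarrow> complex set" where
  "numrange_on M A = {cinner (A x) x | x. x \<in> M \<and> norm x = 1}"

definition numrange :: "('a::complex_inner_space \<Rightarrow> 'a) \<Rightarrow> complex set" where
  "numrange T = numrange_on UNIV T"

text \<open>Hausdorff distance (used for nonempty compact subsets of \<open>\<complex>\<close>).\<close>
definition hausdorff_dist :: "complex set \<Rightarrow> complex set \<Rightarrow> real" where
  "hausdorff_dist A B = max (SUP x\<in>A. infdist x B) (SUP y\<in>B. infdist y A)"

end

theory Submission
  imports Defs
begin




lemma cinner_zero_left[simp]: "cinner (0::'a::complex_inner_space) y = 0"
  using cinner_add_left[of "0::'a" 0 y] by simp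

lemma cinner_zero_right[simp]: "cinner (x::'a::complex_inner_space) 0 = 0"
  using cinner_commute[of x 0] by simp

lemma cinner_add_right: "cinner (x::'a::complex_inner_space) (y + z) = cinner x y + cinner x z"
  by (metis cinner_add_left cinner_commute complex_cnj_add)

lemma cinner_minus_left: "cinner (- (x::'a::complex_inner_space)) y = - cinner x y"
proof -
  have "cinner x y + cinner (-x) y = 0" using cinner_add_left[of x "-x" y] by simp
  then show ?thesis by (metis minus_unique)
qed

lemma cinner_minus_right: "cinner (x::'a::complex_inner_space) (- y) = - cinner x y"
  by (metis cinner_commute cinner_minus_left complex_cnj_minus)

lemma cinner_diff_left: "cinner ((x::'a::complex_inner_space) - y) z = cinner x z - cinner y z"
  by (simp only: diff_conv_add_uminus cinner_add_left cinner_minus_left)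

lemma cinner_diff_right: "cinner (x::'a::complex_inner_space) (y - z) = cinner x y - cinner x z"
  by (simp only: diff_conv_add_uminus cinner_add_right cinner_minus_right)

lemma cinner_cscale_right: "cinner (x::'a::complex_inner_space) (cscale a y) = cnj a * cinner x y"
  by (metis cinner_commute cinner_cscale_left complex_cnj_mult)

lemma cinner_scaleR_left: "cinner (scaleR r (x::'a::complex_inner_space)) y = of_real r * cinner x y"
  by (metis cinner_cscale_left cscale_of_real)

lemma cinner_scaleR_right: "cinner (x::'a::complex_inner_space) (scaleR r y) = of_real r * cinner x y"
  by (metis cinner_cscale_right cscale_of_real complex_cnj_complex_of_real)

lemma cinner_self_Im: "Im (cinner (x::'a::complex_inner_space) x) = 0"
  using cinner_commute[of x x] by (metis Im_complex_of_real Reals_cnj_iff complex_is_Real_iff)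

lemma norm_sq_cinner: "(norm (x::'a::complex_inner_space))\<^sup>2 = Re (cinner x x)"
  by (simp add: norm_eq_sqrt_cinner cinner_self_nonneg)

lemma cinner_self_eq: "cinner (x::'a::complex_inner_space) x = of_real ((norm x)\<^sup>2)"
  by (simp add: norm_sq_cinner complex_eq_iff cinner_self_Im)

lemma norm_add_sq: "(norm ((x::'a::complex_inner_space) + y))\<^sup>2 = (norm x)\<^sup>2 + (norm y)\<^sup>2 + 2 * Re (cinner x y)"
proof -
  have "Re (cinner y x) = Re (cinner x y)" by (subst cinner_commute) simp
  then show ?thesis unfolding norm_sq_cinner by (simp add: cinner_add_left cinner_add_right)
qed

lemma norm_diff_sq: "(norm ((x::'a::complex_inner_space) - y))\<^sup>2 = (norm x)\<^sup>2 + (norm y)\<^sup>2 - 2 * Re (cinner x y)"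
  using norm_add_sq[of x "-y"] by (simp add: cinner_minus_right)

lemma Re_cinner_le: "\<bar>Re (cinner (x::'a::complex_inner_space) y)\<bar> \<le> norm x * norm y"
proof (cases "y = 0")
  case True then show ?thesis by simp
next
  case False
  define N where "N = (norm y)\<^sup>2"
  define r where "r = Re (cinner x y)"
  have N: "N > 0" using False by (simp add: N_def)
  have "0 \<le> (norm (x - scaleR (r / N) y))\<^sup>2" by simp
  also have "\<dots> = (norm x)\<^sup>2 + (r/N)\<^sup>2 * N - 2 * (r/N) * r"
    unfolding norm_diff_sq cinner_scaleR_right N_def r_def norm_scaleR power_mult_distrib real_norm_def power2_abs
    by simp
  also have "\<dots> = (norm x)\<^sup>2 - r\<^sup>2 / N" using N by (simp add: field_simps power2_eq_square)
  finally have "r\<^sup>2 \<le> (norm x)\<^sup>2 * N" using N by (simp add: field_simps)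
  then have "\<bar>r\<bar>\<^sup>2 \<le> (norm x * norm y)\<^sup>2" by (simp add: N_def power_mult_distrib)
  then show ?thesis unfolding r_def by (rule power2_le_imp_le) simp
qed

lemma norm_cscale: "norm (cscale a (x::'a::complex_inner_space)) = norm a * norm x"
proof -
  have "(norm (cscale a x))\<^sup>2 = Re (a * cnj a * cinner x x)"
    by (simp only: norm_sq_cinner cinner_cscale_left cinner_cscale_right mult.assoc mult.left_commute)
  also have "\<dots> = (norm a * norm x)\<^sup>2"
    by (simp only: cinner_self_eq complex_norm_square[symmetric] power_mult_distrib flip: of_real_mult)
       (simp only: Re_complex_of_real)
  finally show ?thesis by (simp add: power2_eq_iff_nonneg)
qed

lemma cinner_le: "norm (cinner (x::'a::complex_inner_space) y) \<le> norm x * norm y"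
proof (cases "cinner x y = 0")
  case True then show ?thesis by simp
next
  case False
  define z where "z = cinner x y"
  define u where "u = cnj z / of_real (norm z)"
  have nu: "norm u = 1" using False by (simp add: u_def z_def norm_divide)
  have "cinner (cscale u x) y = of_real (norm z)"
    using False by (simp add: cinner_cscale_left u_def z_def complex_norm_square[symmetric] power2_eq_square
       complex_mult_cnj[symmetric] mult.commute)
  then have "norm z = Re (cinner (cscale u x) y)" by simp
  also have "\<dots> \<le> norm (cscale u x) * norm y" using Re_cinner_le[of "cscale u x" y] by simp
  finally show ?thesis by (simp add: norm_cscale nu z_def)
qed



lemma bounded_bilinear_cinner: "bounded_bilinear (cinner :: 'a::complex_inner_space \<Rightarrow> 'a \<Rightarrow> complex)"
proof
  fix a a' b b' :: 'a and r :: real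
  show "cinner (a + a') b = cinner a b + cinner a' b" by (rule cinner_add_left)
  show "cinner a (b + b') = cinner a b + cinner a b'" by (rule cinner_add_right)
  show "cinner (scaleR r a) b = scaleR r (cinner a b)" by (simp add: cinner_scaleR_left scaleR_conv_of_real)
  show "cinner a (scaleR r b) = scaleR r (cinner a b)" by (simp add: cinner_scaleR_right scaleR_conv_of_real)
  show "\<exists>K. \<forall>a b::'a. norm (cinner a b) \<le> norm a * norm b * K"
    by (rule exI[of _ 1]) (simp add: cinner_le)
qed

lemmas tendsto_cinner = bounded_bilinear.tendsto[OF bounded_bilinear_cinner]

lemma subspace_scaleR: "closed_csubspace M \<Longrightarrow> x \<in> M \<Longrightarrow> scaleR r x \<in> M"
  unfolding closed_csubspace_def by (metis cscale_of_real)

lemma subspace_add: "closed_csubspace M \<Longrightarrow> x \<in> M \<Longrightarrow> y \<in> M \<Longrightarrow> x + y \<in> M"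
  unfolding closed_csubspace_def by blast

lemma subspace_cscale: "closed_csubspace M \<Longrightarrow> x \<in> M \<Longrightarrow> cscale a x \<in> M"
  unfolding closed_csubspace_def by blast

lemma subspace_diff: "closed_csubspace M \<Longrightarrow> x \<in> M \<Longrightarrow> y \<in> M \<Longrightarrow> x - y \<in> M"
  using subspace_add[of M x "scaleR (-1) y"] subspace_scaleR[of M y "-1"] by simp

lemma min_orth:
  fixes w z :: "'a::complex_inner_space"
  assumes "\<And>t::real. norm w \<le> norm (w - scaleR t z)"
  shows "Re (cinner w z) = 0"
proof (cases "z = 0")
  case True then show ?thesis by simp
next
  case False
  define N where "N = (norm z)\<^sup>2"
  define r where "r = Re (cinner w z)"
  have N: "N > 0" using False by (simp add: N_def)
  have "(norm w)\<^sup>2 \<le> (norm (w - scaleR (r/N) z))\<^sup>2"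
    using assms[of "r/N"] by (simp add: power_mono)
  also have "\<dots> = (norm w)\<^sup>2 + (r/N)\<^sup>2 * N - 2 * (r/N) * r"
    unfolding norm_diff_sq cinner_scaleR_right N_def r_def norm_scaleR power_mult_distrib real_norm_def power2_abs
    by simp
  also have "\<dots> = (norm w)\<^sup>2 - r\<^sup>2 / N" using N by (simp add: field_simps power2_eq_square)
  finally have "r\<^sup>2 / N \<le> 0" by simp
  then have "r\<^sup>2 \<le> 0" using N by (simp add: divide_le_0_iff)
  then show ?thesis unfolding r_def by simp
qed

lemma proj_exists:
  fixes M :: "'a::complex_hilbert_space set"
  assumes M: "closed_csubspace M"
  shows "\<exists>y\<in>M. \<forall>z\<in>M. cinner (x - y) z = 0"
proof -
  have M0: "0 \<in> M" and Mcl: "closed M" using M unfolding closed_csubspace_def by auto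
  then have Mne: "M \<noteq> {}" by auto
  define d where "d = infdist x M"
  have d0: "0 \<le> d" unfolding d_def by (rule infdist_nonneg)
  define e :: "nat \<Rightarrow> real" where "e k = inverse (real (Suc k))" for k
  have e0: "e k > 0" for k by (simp add: e_def)
  have "\<exists>m\<in>M. dist x m < d + e k" for k
  proof -
    have "(INF a\<in>M. dist x a) < d + e k" using e0[of k] by (simp add: d_def infdist_notempty[OF Mne])
    then show ?thesis using Mne by (subst (asm) cINF_less_iff) (auto intro: bdd_belowI[of _ 0])
  qed
  then obtain m where mM: "\<And>k. m k \<in> M" and md: "\<And>k. dist x (m k) < d + e k" by metis
  have dle: "d \<le> dist x v" if "v \<in> M" for v unfolding d_def using that by (rule infdist_le)
  have key: "(norm (v - w))\<^sup>2 \<le> (4*d*e1 + 2*e1\<^sup>2) + (4*d*e2 + 2*e2\<^sup>2)"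
    if v: "v \<in> M" "dist x v \<le> d + e1" and w: "w \<in> M" "dist x w \<le> d + e2" and e: "0 \<le> e1" "0 \<le> e2"
    for v w e1 e2
  proof -
    define mid where "mid = scaleR (1/2) (v + w)"
    have "mid \<in> M" unfolding mid_def by (intro subspace_scaleR subspace_add M v w)
    then have dm: "d \<le> norm (x - mid)" using dle by (simp add: dist_norm)
    have par: "(norm ((x - v) + (x - w)))\<^sup>2 + (norm ((x - v) - (x - w)))\<^sup>2 = 2 * (norm (x-v))\<^sup>2 + 2 * (norm (x-w))\<^sup>2"
      unfolding norm_add_sq norm_diff_sq by simp
    have "(x - v) + (x - w) = scaleR 2 (x - mid)" unfolding mid_def by (simp add: algebra_simps scaleR_2)
    then have "(norm ((x - v) + (x - w)))\<^sup>2 = 4 * (norm (x - mid))\<^sup>2" by (simp add: power_mult_distrib)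
    moreover have "4 * d\<^sup>2 \<le> 4 * (norm (x - mid))\<^sup>2" using dm d0 by (simp add: power_mono)
    moreover have "(norm (x-v))\<^sup>2 \<le> (d + e1)\<^sup>2" using v(2) by (simp add: dist_norm power_mono)
    moreover have "(norm (x-w))\<^sup>2 \<le> (d + e2)\<^sup>2" using w(2) by (simp add: dist_norm power_mono)
    moreover have "(x - v) - (x - w) = - (v - w)" by simp
    ultimately have "(norm (v - w))\<^sup>2 \<le> 2 * (d + e1)\<^sup>2 + 2 * (d + e2)\<^sup>2 - 4 * d\<^sup>2"
      using par by (simp only: norm_minus_cancel)
    then show ?thesis by (simp add: power2_eq_square algebra_simps)
  qed
  define c where "c k = sqrt (4*d*e k + 2*(e k)\<^sup>2)" for k
  have e_lim: "e \<longlonglongrightarrow> 0" unfolding e_def by (rule LIMSEQ_inverse_real_of_nat)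
  have c_lim: "c \<longlonglongrightarrow> 0"
    unfolding c_def using tendsto_real_sqrt[OF tendsto_add[OF tendsto_mult[OF tendsto_const e_lim] tendsto_mult[OF tendsto_const tendsto_power[OF e_lim]]], of "4*d" 2 2]
    by simp
  have mc: "norm (m j - m k) \<le> c j + c k" for j k
  proof -
    have "(norm (m j - m k))\<^sup>2 \<le> (4*d*e j + 2*(e j)\<^sup>2) + (4*d*e k + 2*(e k)\<^sup>2)"
      using key[OF mM[of j] _ mM[of k]] md[of j] md[of k] e0[of j] e0[of k] by (simp add: less_imp_le)
    then have "norm (m j - m k) \<le> sqrt ((4*d*e j + 2*(e j)\<^sup>2) + (4*d*e k + 2*(e k)\<^sup>2))"
      by (simp add: real_le_rsqrt)
    also have "\<dots> \<le> c j + c k" unfolding c_def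
      using e0[of j] e0[of k] d0 by (intro sqrt_add_le_add_sqrt) auto
    finally show ?thesis .
  qed
  have "Cauchy m"
  proof (rule CauchyI)
    fix \<epsilon> :: real assume "0 < \<epsilon>"
    then have "\<forall>\<^sub>F n in sequentially. dist (c n) 0 < \<epsilon>/2" using c_lim unfolding tendsto_iff by (metis half_gt_zero)
    then obtain N where N: "\<And>n. n \<ge> N \<Longrightarrow> \<bar>c n\<bar> < \<epsilon>/2" by (auto simp: eventually_sequentially)
    show "\<exists>M. \<forall>j\<ge>M. \<forall>k\<ge>M. norm (m j - m k) < \<epsilon>"
    proof (intro exI[of _ N] allI impI)
      fix j k assume "N \<le> j" "N \<le> k"
      then have "\<bar>c j\<bar> < \<epsilon>/2" "\<bar>c k\<bar> < \<epsilon>/2" using N by auto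
      then show "norm (m j - m k) < \<epsilon>" using mc[of j k] by linarith
    qed
  qed
  then obtain y where my: "m \<longlonglongrightarrow> y" by (auto simp: Cauchy_convergent_iff convergent_def)
  have yM: "y \<in> M" using closed_sequentially[OF Mcl mM my] .
  have "dist x y \<le> d"
  proof (rule tendsto_le[OF trivial_limit_sequentially])
    show "(\<lambda>k. d + e k) \<longlonglongrightarrow> d" using tendsto_add[OF tendsto_const e_lim] by simp
    show "(\<lambda>k. dist x (m k)) \<longlonglongrightarrow> dist x y" by (intro tendsto_intros my)
    show "\<forall>\<^sub>F k in sequentially. dist x (m k) \<le> d + e k" using md by (simp add: less_imp_le)
  qed
  then have ymin: "norm (x - y) \<le> norm (x - v)" if "v \<in> M" for v
    using dle[OF that] by (simp add: dist_norm)
  have "cinner (x - y) z = 0" if z: "z \<in> M" for z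
  proof -
    have "Re (cinner (x - y) u) = 0" if u: "u \<in> M" for u
    proof (rule min_orth)
      fix t :: real
      have "y + scaleR t u \<in> M" by (intro subspace_add subspace_scaleR M yM u)
      then show "norm (x - y) \<le> norm (x - y - scaleR t u)" using ymin by (simp add: diff_diff_eq)
    qed
    from this[OF z] this[OF subspace_cscale[OF M z, of \<i>]]
    show ?thesis by (simp add: cinner_cscale_right complex_eq_iff)
  qed
  then show ?thesis using yM by blast
qed

lemma proj_onto_props:
  fixes M :: "'a::complex_hilbert_space set"
  assumes M: "closed_csubspace M"
  shows "proj_onto M x \<in> M \<and> (\<forall>z\<in>M. cinner (x - proj_onto M x) z = 0)"
  unfolding proj_onto_def
proof (rule theI')
  show "\<exists>!y. y \<in> M \<and> (\<forall>z\<in>M. cinner (x - y) z = 0)"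
  proof (rule ex_ex1I)
    show "\<exists>y. y \<in> M \<and> (\<forall>z\<in>M. cinner (x - y) z = 0)" using proj_exists[OF M] by blast
  next
    fix y1 y2 assume 1: "y1 \<in> M \<and> (\<forall>z\<in>M. cinner (x - y1) z = 0)" and 2: "y2 \<in> M \<and> (\<forall>z\<in>M. cinner (x - y2) z = 0)"
    then have dM: "y1 - y2 \<in> M" using subspace_diff[OF M] by blast
    have "cinner (y1 - y2) (y1 - y2) = cinner ((x - y2) - (x - y1)) (y1 - y2)" by simp
    also have "\<dots> = 0" using 1 2 dM by (simp only: cinner_diff_left) simp
    finally show "y1 = y2" by (simp add: cinner_self_eq)
  qed
qed

lemma proj_onto_cinner:
  fixes M :: "'a::complex_hilbert_space set"
  assumes M: "closed_csubspace M" and z: "z \<in> M"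
  shows "cinner (proj_onto M x) z = cinner x z"
  using proj_onto_props[OF M, of x] z by (auto simp: cinner_diff_left)



lemma bounded_op_linear: "bounded_op T \<Longrightarrow> bounded_linear T"
  unfolding bounded_op_def clinear_def
  by (metis bounded_linear_intro cscale_of_real mult.commute)

lemma norm_unit: "(x::'a::real_normed_vector) \<noteq> 0 \<Longrightarrow> norm (scaleR (inverse (norm x)) x) = 1"
  by simp

lemma cinner_op_le:
  assumes "bounded_linear T" "norm (x::'a::complex_inner_space) = 1"
  shows "norm (cinner (T x) x) \<le> onorm T"
  using cinner_le[of "T x" x] onorm[OF assms(1), of x] assms(2) by simp

lemma infdist_side:
  fixes A B :: "'b::metric_space set"
  assumes "B \<noteq> {}" "\<forall>u\<in>A. \<exists>v\<in>B. dist u v \<le> c" "w \<in> closure A"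
  shows "infdist w (closure B) \<le> c"
proof -
  have "infdist w (closure B) \<le> infdist w B"
    using assms(1) by (intro infdist_mono closure_subset)
  also have "infdist w B \<le> c"
  proof (rule field_le_epsilon)
    fix e :: real assume "0 < e"
    then obtain u where u: "u \<in> A" "dist u w < e" using assms(3) closure_approachable by metis
    then obtain v where v: "v \<in> B" "dist u v \<le> c" using assms(2) by blast
    have "infdist w B \<le> infdist u B + dist w u" by (rule infdist_triangle)
    also have "infdist u B \<le> dist u v" using v(1) by (rule infdist_le)
    finally show "infdist w B \<le> c + e" using u v by (simp add: dist_commute)
  qed
  finally show ?thesis .
qed

lemma hd_le:
  fixes A B :: "complex set"
  assumes "A \<noteq> {}" "B \<noteq> {}" "\<forall>u\<in>A. \<exists>v\<in>B. dist u v \<le> c" "\<forall>v\<in>B. \<exists>u\<in>A. dist v u \<le> c"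
  shows "0 \<le> hausdorff_dist (closure A) (closure B) \<and> hausdorff_dist (closure A) (closure B) \<le> c"
proof -
  have cA: "closure A \<noteq> {}" "closure B \<noteq> {}" using assms(1,2) by auto
  have 1: "infdist w (closure B) \<le> c" if "w \<in> closure A" for w using infdist_side[OF assms(2,3) that] .
  have 2: "infdist w (closure A) \<le> c" if "w \<in> closure B" for w using infdist_side[OF assms(1,4) that] .
  have s1: "(SUP x\<in>closure A. infdist x (closure B)) \<le> c" using cA 1 by (intro cSUP_least) auto
  have s2: "(SUP x\<in>closure B. infdist x (closure A)) \<le> c" using cA 2 by (intro cSUP_least) auto
  obtain a where a: "a \<in> closure A" using assms(1) closure_subset by blast
  have "0 \<le> (SUP x\<in>closure A. infdist x (closure B))"
    using 1 by (intro cSUP_upper2[OF _ a] infdist_nonneg bdd_aboveI2[where M=c]) auto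
  then show ?thesis using s1 s2 unfolding hausdorff_dist_def by auto
qed

lemma numrange_ne:
  assumes "\<exists>x::'a::complex_inner_space. x \<noteq> 0"
  shows "numrange (T::'a\<Rightarrow>'a) \<noteq> {}"
proof -
  obtain x :: 'a where "x \<noteq> 0" using assms by auto
  then have "cinner (T (scaleR (inverse (norm x)) x)) (scaleR (inverse (norm x)) x) \<in> numrange T"
    unfolding numrange_def numrange_on_def by (intro CollectI exI[of _ "scaleR (inverse (norm x)) x"]) simp
  then show ?thesis by auto
qed

lemma part1:
  fixes T S :: "'a::complex_inner_space \<Rightarrow> 'a"
  assumes nontriv: "\<exists>x::'a. x \<noteq> 0" and T: "bounded_op T" and S: "bounded_op S"
  shows "hausdorff_dist (closure (numrange T)) (closure (numrange S)) \<le> onorm (\<lambda>x. T x - S x)"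
proof -
  have lT: "bounded_linear T" and lS: "bounded_linear S" using T S by (auto intro: bounded_op_linear)
  have l1: "bounded_linear (\<lambda>x. T x - S x)" using lT lS by (rule bounded_linear_sub)
  have l2: "bounded_linear (\<lambda>x. S x - T x)" using lS lT by (rule bounded_linear_sub)
  have on: "onorm (\<lambda>x. S x - T x) = onorm (\<lambda>x. T x - S x)"
    using onorm_neg[of "\<lambda>x. T x - S x"] by simp
  have gen: "\<forall>u\<in>numrange A. \<exists>v\<in>numrange B. dist u v \<le> onorm (\<lambda>x. A x - B x)"
    if lA: "bounded_linear A" and lB: "bounded_linear B" for A B :: "'a \<Rightarrow> 'a"
  proof
    fix u assume "u \<in> numrange A"
    then obtain x where x: "u = cinner (A x) x" "norm x = 1" unfolding numrange_def numrange_on_def by auto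
    have "cinner (B x) x \<in> numrange B" using x unfolding numrange_def numrange_on_def by auto
    moreover have "dist u (cinner (B x) x) = norm (cinner (A x - B x) x)"
      using x by (simp add: dist_norm cinner_diff_left)
    moreover have "\<dots> \<le> onorm (\<lambda>x. A x - B x)"
      using cinner_op_le[OF bounded_linear_sub[OF lA lB] x(2)] by simp
    ultimately show "\<exists>v\<in>numrange B. dist u v \<le> onorm (\<lambda>x. A x - B x)" by (metis order_trans order_refl)
  qed
  show ?thesis
    using hd_le[OF numrange_ne[OF nontriv] numrange_ne[OF nontriv] gen[OF lT lS] gen[OF lS lT, unfolded on]]
    by simp
qed



lemma real_ineq:
  fixes s d :: real
  assumes "0 \<le> s" "s \<le> d" "d < 1"
  shows "s * (2 + s) / (1 - s\<^sup>2) \<le> d * (1 + 2 / (1 - d)\<^sup>2)"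
proof -
  have d0: "0 \<le> d" using assms by linarith
  have s1: "s\<^sup>2 \<le> d\<^sup>2" using assms by (simp add: power_mono)
  have d2: "d\<^sup>2 < 1" using assms d0 by (simp add: power_less_one_iff abs_less_iff)
  have "s * (2 + s) / (1 - s\<^sup>2) \<le> d * (2 + d) / (1 - d\<^sup>2)"
  proof (rule frac_le)
    show "0 \<le> d * (2 + d)" using d0 by simp
    show "s * (2 + s) \<le> d * (2 + d)" using assms by (intro mult_mono) auto
    show "0 < 1 - d\<^sup>2" using d2 by simp
    show "1 - d\<^sup>2 \<le> 1 - s\<^sup>2" using s1 by simp
  qed
  also have "\<dots> \<le> d * (1 + 2 / (1 - d)\<^sup>2)"
  proof -
    have p: "0 < 1 - d" "0 < 1 + d" using assms d0 by auto
    have "1 - d\<^sup>2 = (1-d)*(1+d)" by (simp add: power2_eq_square algebra_simps)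
    moreover have "(2 + d) * (1 - d) \<le> (1 + d) * ((1-d)\<^sup>2 + 2)"
    proof -
      have "(1 + d) * ((1-d)\<^sup>2 + 2) - (2 + d) * (1 - d) = 1 + 2*d + d^3"
        by (simp add: power2_eq_square power3_eq_cube algebra_simps)
      also have "\<dots> \<ge> 0" using d0 by simp
      finally show ?thesis by simp
    qed
    ultimately have "(2 + d) / (1 - d\<^sup>2) \<le> 1 + 2 / (1 - d)\<^sup>2"
    proof -
      assume e: "1 - d\<^sup>2 = (1-d)*(1+d)" and le: "(2 + d) * (1 - d) \<le> (1 + d) * ((1-d)\<^sup>2 + 2)"
      have q: "(1-d)\<^sup>2*(1+d) > 0" using p by simp
      have "(2+d)/(1-d\<^sup>2) = (2+d)*(1-d) / ((1-d)\<^sup>2*(1+d))"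
      proof -
        have "(2+d)/(1-d\<^sup>2) = ((2+d)*(1-d))/(((1-d)*(1+d))*(1-d))"
          unfolding e using p by (subst nonzero_mult_divide_mult_cancel_right) auto
        also have "((1-d)*(1+d))*(1-d) = (1-d)\<^sup>2*(1+d)" by (simp add: power2_eq_square)
        finally show ?thesis .
      qed
      also have "\<dots> \<le> ((1 + d) * ((1-d)\<^sup>2 + 2)) / ((1-d)\<^sup>2*(1+d))"
        using le q by (intro divide_right_mono) auto
      also have "\<dots> = ((1-d)\<^sup>2 + 2) / (1-d)\<^sup>2"
        using p by (simp only: mult.commute[of "1+d"] nonzero_mult_divide_mult_cancel_right[of "1+d"])
      also have "\<dots> = 1 + 2 / (1 - d)\<^sup>2" using p by (simp only: add_divide_distrib) simp
      finally show ?thesis .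
    qed
    then have "d * ((2 + d) / (1 - d\<^sup>2)) \<le> d * (1 + 2 / (1 - d)\<^sup>2)" using d0 by (rule mult_left_mono)
    then show ?thesis by (simp only: times_divide_eq_right mult.assoc)
  qed
  finally show ?thesis .
qed



lemma bl_scale: "bounded_linear f \<Longrightarrow> f (scaleR r x) = scaleR r (f x)"
  by (rule linear_scale[OF bounded_linear.linear])
lemma bl_diff: "bounded_linear f \<Longrightarrow> f (x - y) = f x - f y"
  by (rule linear_diff[OF bounded_linear.linear])

lemma orth_linear: "orth_projection P \<Longrightarrow> bounded_linear P"
  unfolding orth_projection_def by (auto intro: bounded_op_linear)

lemma orth_range_fix: "orth_projection P \<Longrightarrow> x \<in> range P \<Longrightarrow> P x = x"
  unfolding orth_projection_def by auto

lemma orth_value: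
  assumes "orth_projection P" "x \<in> range P"
  shows "cinner (P (T (P x))) x = cinner (T x) x"
  using assms unfolding orth_projection_def by (metis rangeE)

lemma step3:
  fixes T P Q :: "'a::complex_inner_space \<Rightarrow> 'a"
  assumes T: "bounded_linear T" and P: "orth_projection P" and Q: "orth_projection Q"
    and dl: "onorm (\<lambda>x. P x - Q x) < 1" and x: "x \<in> range P" "norm x = 1"
  shows "\<exists>y\<in>range Q. norm y = 1 \<and> dist (cinner (P (T (P x))) x) (cinner (Q (T (Q y))) y)
            \<le> onorm T * onorm (\<lambda>x. P x - Q x) * (1 + 2 / (1 - onorm (\<lambda>x. P x - Q x))\<^sup>2)"
proof -
  define \<delta> where "\<delta> = onorm (\<lambda>x. P x - Q x)"
  define K where "K = onorm T"
  have lP: "bounded_linear P" and lQ: "bounded_linear Q" using P Q by (auto intro: orth_linear)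
  have lPQ: "bounded_linear (\<lambda>x. P x - Q x)" using lP lQ by (rule bounded_linear_sub)
  have K0: "0 \<le> K" unfolding K_def by (rule onorm_pos_le[OF T])
  have Px: "P x = x" using orth_range_fix[OF P x(1)] .
  define a where "a = Q x"
  define r where "r = x - a"
  have QQ: "Q (Q u) = Q u" for u using Q unfolding orth_projection_def by auto
  have Qadj: "cinner (Q u) v = cinner u (Q v)" for u v using Q unfolding orth_projection_def by auto
  have ar: "cinner a r = 0"
  proof -
    have "cinner a a = cinner (Q x) x" unfolding a_def using Qadj[of "Q x" x] QQ[of x] by simp
    then show ?thesis unfolding r_def by (simp add: cinner_diff_right a_def)
  qed
  define s where "s = norm r"
  have s_le: "s \<le> \<delta>"
  proof -
    have "r = P x - Q x" unfolding r_def a_def using Px by simp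
    then show ?thesis using onorm[OF lPQ, of x] x(2) by (simp add: s_def \<delta>_def)
  qed
  have s0: "0 \<le> s" unfolding s_def by simp
  have s1: "s < 1" using s_le dl unfolding \<delta>_def by simp
  have n2: "(norm a)\<^sup>2 = 1 - s\<^sup>2"
  proof -
    have "x = a + r" unfolding r_def by simp
    then have "(norm x)\<^sup>2 = (norm a)\<^sup>2 + (norm r)\<^sup>2 + 2 * Re (cinner a r)" using norm_add_sq by metis
    then show ?thesis using x(2) ar by (simp add: s_def)
  qed
  have s2: "s\<^sup>2 < 1" using s0 s1 by (simp add: power_less_one_iff)
  have npos: "(norm a)\<^sup>2 > 0" using n2 s2 by simp
  then have a0: "a \<noteq> 0" by auto
  have na1: "norm a \<le> 1" using n2 s0 by (smt (verit) power2_le_imp_le zero_le_power2 norm_ge_zero one_power2)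
  define c where "c = inverse (norm a)"
  define y where "y = scaleR c a"
  have Qy: "Q y = y" unfolding y_def a_def using bl_scale[OF lQ] QQ by simp
  have yQ: "y \<in> range Q" using Qy by (metis rangeI)
  have ny: "norm y = 1" unfolding y_def c_def using a0 by simp
  have vx: "cinner (P (T (P x))) x = cinner (T x) x" using orth_value[OF P x(1)] .
  have vy: "cinner (Q (T (Q y))) y = cinner (T y) y" using orth_value[OF Q yQ] .
  have Ty: "cinner (T y) y = cinner (T a) a / of_real ((norm a)\<^sup>2)"
  proof -
    have "cinner (T y) y = of_real c * (of_real c * cinner (T a) a)"
      unfolding y_def by (simp add: bl_scale[OF T] cinner_scaleR_left cinner_scaleR_right)
    also have "\<dots> = cinner (T a) a / of_real ((norm a)\<^sup>2)"
      unfolding c_def by (simp add: field_simps power2_eq_square)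
    finally show ?thesis .
  qed
  have E1: "norm (cinner (T x) x - cinner (T a) a) \<le> 2 * K * s"
  proof -
    have "cinner (T x) x - cinner (T a) a = cinner (T r) x + cinner (T a) r"
      unfolding r_def by (simp add: bl_diff[OF T] cinner_diff_left cinner_diff_right)
    also have "norm \<dots> \<le> norm (cinner (T r) x) + norm (cinner (T a) r)" by (rule norm_triangle_ineq)
    also have "\<dots> \<le> K * s + K * s"
    proof (rule add_mono)
      show "norm (cinner (T r) x) \<le> K * s"
        using cinner_le[of "T r" x] onorm[OF T, of r] x(2) by (simp add: K_def s_def)
      have "norm (cinner (T a) r) \<le> norm (T a) * s" using cinner_le[of "T a" r] by (simp add: s_def)
      also have "\<dots> \<le> (K * norm a) * s" using onorm[OF T, of a] s0 by (simp add: K_def mult_right_mono)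
      also have "\<dots> \<le> K * s" using na1 K0 s0 by (metis mult.assoc mult.commute mult_left_le mult_nonneg_nonneg)
      finally show "norm (cinner (T a) r) \<le> K * s" .
    qed
    finally show ?thesis by simp
  qed
  have E2: "norm (cinner (T x) x) \<le> K" using cinner_op_le[OF T x(2)] by (simp add: K_def)
  define X where "X = cinner (T x) x"
  define Y where "Y = cinner (T a) a"
  have eqX: "X - Y / of_real ((norm a)\<^sup>2) = ((X - Y) - of_real (s\<^sup>2) * X) / of_real ((norm a)\<^sup>2)"
  proof -
    have nz: "of_real ((norm a)\<^sup>2) \<noteq> (0::complex)" using npos by simp
    have "of_real (s\<^sup>2) = 1 - (of_real ((norm a)\<^sup>2) :: complex)" using n2 by simp
    moreover have "X - Y / N = ((X - Y) - (1 - N) * X) / N" if "N \<noteq> 0" for N :: complex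
      using that by (simp add: field_simps)
    ultimately show ?thesis using nz by simp
  qed
  then have "norm (X - Y / of_real ((norm a)\<^sup>2)) = norm ((X - Y) - of_real (s\<^sup>2) * X) / (1 - s\<^sup>2)"
  proof -
    have "norm (of_real ((norm a)\<^sup>2) :: complex) = 1 - s\<^sup>2" by (simp only: norm_of_real n2) (use s2 in simp)
    then show ?thesis by (simp only: norm_divide eqX)
  qed
  also have "\<dots> \<le> (2 * K * s + s\<^sup>2 * K) / (1 - s\<^sup>2)"
  proof (rule divide_right_mono)
    have "norm ((X - Y) - of_real (s\<^sup>2) * X) \<le> norm (X - Y) + norm (of_real (s\<^sup>2) * X)" by (rule norm_triangle_ineq4)
    also have "\<dots> \<le> 2 * K * s + s\<^sup>2 * K"
      using E1 E2 unfolding X_def Y_def by (intro add_mono) (auto simp: norm_mult norm_power mult_left_mono)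
    finally show "norm ((X - Y) - of_real (s\<^sup>2) * X) \<le> 2 * K * s + s\<^sup>2 * K" .
    show "0 \<le> 1 - s\<^sup>2" using s2 by simp
  qed
  also have "\<dots> = K * (s * (2 + s) / (1 - s\<^sup>2))" by (simp add: field_simps power2_eq_square)
  also have "\<dots> \<le> K * (\<delta> * (1 + 2 / (1 - \<delta>)\<^sup>2))"
    using real_ineq[OF s0 s_le] dl K0 unfolding \<delta>_def by (intro mult_left_mono) auto
  finally have "dist (cinner (P (T (P x))) x) (cinner (Q (T (Q y))) y) \<le> K * (\<delta> * (1 + 2 / (1 - \<delta>)\<^sup>2))"
    unfolding vx vy Ty dist_norm X_def Y_def .
  then show ?thesis using yQ ny unfolding K_def \<delta>_def by (auto simp: mult.assoc)
qed



lemma range_unit: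
  assumes "orth_projection P" "P \<noteq> (\<lambda>x. 0)"
  shows "\<exists>x\<in>range P. norm x = 1"
proof -
  obtain x0 where "P x0 \<noteq> 0" using assms(2) by auto
  moreover have "scaleR (inverse (norm (P x0))) (P x0) = P (scaleR (inverse (norm (P x0))) x0)"
    using bl_scale[OF orth_linear[OF assms(1)]] by simp
  ultimately show ?thesis by (metis rangeI norm_unit)
qed

lemma numrange_on_ne:
  assumes "\<exists>x\<in>M. norm x = 1"
  shows "numrange_on M A \<noteq> {}"
  using assms unfolding numrange_on_def by auto

lemma part3:
  fixes T P Q :: "'a::complex_inner_space \<Rightarrow> 'a"
  assumes T: "bounded_op T" and P: "orth_projection P" and Q: "orth_projection Q"
    and P0: "P \<noteq> (\<lambda>x. 0)" and Q0: "Q \<noteq> (\<lambda>x. 0)" and dl: "onorm (\<lambda>x. P x - Q x) < 1"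
  shows "0 \<le> hausdorff_dist (closure (numrange_on (range P) (\<lambda>x. P (T (P x)))))
                       (closure (numrange_on (range Q) (\<lambda>x. Q (T (Q x)))))
      \<and> hausdorff_dist (closure (numrange_on (range P) (\<lambda>x. P (T (P x)))))
                       (closure (numrange_on (range Q) (\<lambda>x. Q (T (Q x)))))
          \<le> onorm T * onorm (\<lambda>x. P x - Q x) * (1 + 2 / (1 - onorm (\<lambda>x. P x - Q x))\<^sup>2)"
proof -
  have lT: "bounded_linear T" using T by (rule bounded_op_linear)
  have on: "onorm (\<lambda>x. Q x - P x) = onorm (\<lambda>x. P x - Q x)"
    using onorm_neg[of "\<lambda>x. P x - Q x"] by simp
  have gen: "\<forall>u\<in>numrange_on (range A) (\<lambda>x. A (T (A x))). \<exists>v\<in>numrange_on (range B) (\<lambda>x. B (T (B x))).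
     dist u v \<le> onorm T * onorm (\<lambda>x. A x - B x) * (1 + 2 / (1 - onorm (\<lambda>x. A x - B x))\<^sup>2)"
    if A: "orth_projection A" and B: "orth_projection B" and d: "onorm (\<lambda>x. A x - B x) < 1" for A B
  proof
    fix u assume "u \<in> numrange_on (range A) (\<lambda>x. A (T (A x)))"
    then obtain x where x: "u = cinner (A (T (A x))) x" "x \<in> range A" "norm x = 1"
      unfolding numrange_on_def by auto
    from step3[OF lT A B d x(2,3)] obtain y where y: "y \<in> range B" "norm y = 1"
      "dist (cinner (A (T (A x))) x) (cinner (B (T (B y))) y) \<le> onorm T * onorm (\<lambda>x. A x - B x) * (1 + 2 / (1 - onorm (\<lambda>x. A x - B x))\<^sup>2)"
      by blast
    have "cinner (B (T (B y))) y \<in> numrange_on (range B) (\<lambda>x. B (T (B x)))"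
      using y unfolding numrange_on_def by auto
    then show "\<exists>v\<in>numrange_on (range B) (\<lambda>x. B (T (B x))).
     dist u v \<le> onorm T * onorm (\<lambda>x. A x - B x) * (1 + 2 / (1 - onorm (\<lambda>x. A x - B x))\<^sup>2)"
      using y(3) x(1) by blast
  qed
  show ?thesis
    using hd_le[OF numrange_on_ne[OF range_unit[OF P P0]] numrange_on_ne[OF range_unit[OF Q Q0]]
       gen[OF P Q dl] gen[OF Q P, unfolded on, OF dl]] .
qed

lemma part4:
  fixes T P :: "'a::complex_inner_space \<Rightarrow> 'a" and Ps :: "nat \<Rightarrow> 'a \<Rightarrow> 'a"
  assumes T: "bounded_op T" and Ps: "\<And>n. orth_projection (Ps n) \<and> Ps n \<noteq> (\<lambda>x. 0)"
    and P: "orth_projection P" "P \<noteq> (\<lambda>x. 0)"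
    and lim: "(\<lambda>n. onorm (\<lambda>x. Ps n x - P x)) \<longlonglongrightarrow> 0"
  shows "(\<lambda>n. hausdorff_dist (closure (numrange_on (range (Ps n)) (\<lambda>x. Ps n (T (Ps n x)))))
                             (closure (numrange_on (range P) (\<lambda>x. P (T (P x)))))) \<longlonglongrightarrow> 0"
proof (rule tendsto_sandwich)
  define \<delta> where "\<delta> n = onorm (\<lambda>x. Ps n x - P x)" for n
  have ev: "\<forall>\<^sub>F n in sequentially. \<delta> n < 1"
    using lim unfolding \<delta>_def by (rule order_tendstoD) simp
  have b: "0 \<le> hausdorff_dist (closure (numrange_on (range (Ps n)) (\<lambda>x. Ps n (T (Ps n x)))))
                             (closure (numrange_on (range P) (\<lambda>x. P (T (P x)))))
      \<and> hausdorff_dist (closure (numrange_on (range (Ps n)) (\<lambda>x. Ps n (T (Ps n x)))))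
                             (closure (numrange_on (range P) (\<lambda>x. P (T (P x)))))
       \<le> onorm T * \<delta> n * (1 + 2 / (1 - \<delta> n)\<^sup>2)" if "\<delta> n < 1" for n
    using part3[OF T conjunct1[OF Ps[of n]] P(1) conjunct2[OF Ps[of n]] P(2)] that unfolding \<delta>_def by blast
  show "\<forall>\<^sub>F n in sequentially. (\<lambda>n. 0) n \<le> hausdorff_dist (closure (numrange_on (range (Ps n)) (\<lambda>x. Ps n (T (Ps n x)))))
                             (closure (numrange_on (range P) (\<lambda>x. P (T (P x)))))"
    using ev by eventually_elim (use b in blast)
  show "\<forall>\<^sub>F n in sequentially. hausdorff_dist (closure (numrange_on (range (Ps n)) (\<lambda>x. Ps n (T (Ps n x)))))
                             (closure (numrange_on (range P) (\<lambda>x. P (T (P x))))) \<le> onorm T * \<delta> n * (1 + 2 / (1 - \<delta> n)\<^sup>2)"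
    using ev by eventually_elim (use b in blast)
  show "(\<lambda>n. 0::real) \<longlonglongrightarrow> 0" by simp
  have "(\<lambda>n. onorm T * \<delta> n * (1 + 2 / (1 - \<delta> n)\<^sup>2)) \<longlonglongrightarrow> onorm T * 0 * (1 + 2 / (1 - 0)\<^sup>2)"
    using lim unfolding \<delta>_def[symmetric] by (intro tendsto_intros) auto
  then show "(\<lambda>n. onorm T * \<delta> n * (1 + 2 / (1 - \<delta> n)\<^sup>2)) \<longlonglongrightarrow> 0" by simp
qed



lemma part2:
  fixes Hs :: "nat \<Rightarrow> 'a::complex_hilbert_space set" and T :: "'a \<Rightarrow> 'a"
  assumes H: "\<forall>n. closed_csubspace (Hs n) \<and> (\<exists>x\<in>Hs n. x \<noteq> 0) \<and> Hs n \<subseteq> Hs (Suc n)"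
    and dense: "closure (\<Union>n. Hs n) = UNIV" and T: "bounded_op T"
  shows "closure (numrange T) = closure (\<Union>n. numrange_on (Hs n) (\<lambda>x. proj_onto (Hs n) (T x)))
        \<and> (\<lambda>n. hausdorff_dist (closure (numrange_on (Hs n) (\<lambda>x. proj_onto (Hs n) (T x))))
                               (closure (numrange T))) \<longlonglongrightarrow> 0"
proof -
  define A where "A n = numrange_on (Hs n) (\<lambda>x. proj_onto (Hs n) (T x))" for n
  have lT: "bounded_linear T" using T by (rule bounded_op_linear)
  have sub: "closed_csubspace (Hs n)" for n using H by blast
  have nt: "\<exists>x::'a. x \<noteq> 0" using H by blast
  have Aeq: "A n = {cinner (T x) x | x. x \<in> Hs n \<and> norm x = 1}" for n
    unfolding A_def numrange_on_def
  proof (intro set_eqI iffI)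
    fix w assume "w \<in> {cinner (proj_onto (Hs n) (T x)) x |x. x \<in> Hs n \<and> norm x = 1}"
    then obtain x where "w = cinner (proj_onto (Hs n) (T x)) x" "x \<in> Hs n" "norm x = 1" by blast
    then show "w \<in> {cinner (T x) x |x. x \<in> Hs n \<and> norm x = 1}" using proj_onto_cinner[OF sub] by auto
  next
    fix w assume "w \<in> {cinner (T x) x |x. x \<in> Hs n \<and> norm x = 1}"
    then obtain x where x: "w = cinner (T x) x" "x \<in> Hs n" "norm x = 1" by blast
    then have "w = cinner (proj_onto (Hs n) (T x)) x" using proj_onto_cinner[OF sub[of n] x(2), of "T x"] by simp
    then show "w \<in> {cinner (proj_onto (Hs n) (T x)) x |x. x \<in> Hs n \<and> norm x = 1}" using x by blast
  qed
  have Hmono: "Hs n \<subseteq> Hs m" if "n \<le> m" for n m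
  proof -
    have "\<And>k. Hs k \<le> Hs (Suc k)" using H by blast
    from lift_Suc_mono_le[of Hs, OF this that] show ?thesis .
  qed
  have Amono: "A n \<subseteq> A m" if "n \<le> m" for n m
    unfolding Aeq using Hmono[OF that] by blast
  have AW: "A n \<subseteq> numrange T" for n unfolding Aeq numrange_def numrange_on_def by blast
  have Ane: "A n \<noteq> {}" for n
  proof -
    obtain x where x: "x \<in> Hs n" "x \<noteq> 0" using H by blast
    have "scaleR (inverse (norm x)) x \<in> Hs n" using subspace_scaleR[OF sub x(1)] .
    then show ?thesis unfolding Aeq using norm_unit[OF x(2)] by blast
  qed
  define f where "f z = cinner (T z) z / of_real ((norm z)\<^sup>2)" for z
  have fA: "f z \<in> A n" if "z \<in> Hs n" "z \<noteq> 0" for z n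
  proof -
    define c where "c = inverse (norm z)"
    have "cinner (T (scaleR c z)) (scaleR c z) = of_real c * (of_real c * cinner (T z) z)"
      by (simp add: bl_scale[OF lT] cinner_scaleR_left cinner_scaleR_right)
    also have "\<dots> = f z" unfolding c_def f_def by (simp add: field_simps power2_eq_square)
    finally have "cinner (T (scaleR c z)) (scaleR c z) = f z" .
    moreover have "scaleR c z \<in> Hs n" using subspace_scaleR[OF sub that(1)] .
    moreover have "norm (scaleR c z) = 1" unfolding c_def using norm_unit[OF that(2)] .
    ultimately show ?thesis unfolding Aeq by (metis (mono_tags, lifting) mem_Collect_eq)
  qed
  have WA: "numrange T \<subseteq> closure (\<Union>n. A n)"
  proof
    fix w assume "w \<in> numrange T"
    then obtain x where x: "w = cinner (T x) x" "norm x = 1" unfolding numrange_def numrange_on_def by auto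
    have fx: "f x = w" using x by (simp add: f_def)
    have lim: "(f \<longlongrightarrow> f x) (at x)"
      unfolding f_def
      using x by (intro tendsto_divide tendsto_cinner bounded_linear.tendsto[OF lT] tendsto_ident_at tendsto_intros) auto
    show "w \<in> closure (\<Union>n. A n)"
      unfolding closure_approachable
    proof (intro allI impI)
      fix \<epsilon> :: real assume e: "0 < \<epsilon>"
      obtain s where s: "s > 0" "\<And>z. z \<noteq> x \<and> dist z x < s \<Longrightarrow> dist (f z) (f x) < \<epsilon>"
        using metric_LIM_D[OF lim e] by blast
      have "x \<in> closure (\<Union>n. Hs n)" using dense by simp
      then obtain z where z: "z \<in> (\<Union>n. Hs n)" "dist z x < min s (1/2)"
        unfolding closure_approachable using s(1) by (meson min_less_iff_conj half_gt_zero zero_less_one)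
      then obtain n where zn: "z \<in> Hs n" by blast
      have "z \<noteq> 0" using z(2) x(2) by (auto simp: dist_norm)
      then have "f z \<in> A n" using fA zn by blast
      moreover have "dist (f z) w < \<epsilon>"
      proof (cases "z = x")
        case True then show ?thesis using fx e by simp
      next
        case False then show ?thesis using s(2)[of z] z(2) fx by simp
      qed
      ultimately show "\<exists>y\<in>\<Union>n. A n. dist y w < \<epsilon>" by blast
    qed
  qed
  have eq: "closure (numrange T) = closure (\<Union>n. A n)"
  proof
    show "closure (numrange T) \<subseteq> closure (\<Union>n. A n)" using WA closure_minimal by blast
    show "closure (\<Union>n. A n) \<subseteq> closure (numrange T)" using AW by (intro closure_mono) blast
  qed
  have bnd: "bounded (numrange T)"
  proof -
    have "norm w \<le> onorm T" if "w \<in> numrange T" for w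
      using that cinner_op_le[OF lT] unfolding numrange_def numrange_on_def by auto
    then show ?thesis unfolding bounded_iff by blast
  qed
  have cpt: "compact (closure (numrange T))" using bnd by simp
  have "(\<lambda>n. hausdorff_dist (closure (A n)) (closure (numrange T))) \<longlonglongrightarrow> 0"
  proof (rule LIMSEQ_I)
    fix \<epsilon> :: real assume e: "0 < \<epsilon>"
    define U where "U n = (\<Union>u\<in>A n. ball u (\<epsilon>/2))" for n
    have cov: "closure (numrange T) \<subseteq> (\<Union>n\<in>UNIV. U n)"
    proof
      fix w assume "w \<in> closure (numrange T)"
      then have "w \<in> closure (\<Union>n. A n)" using eq by simp
      then obtain u where "u \<in> (\<Union>n. A n)" "dist u w < \<epsilon>/2" using e closure_approachable
        by (metis half_gt_zero)
      then show "w \<in> (\<Union>n\<in>UNIV. U n)" unfolding U_def by auto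
    qed
    have opn: "\<And>n. n \<in> UNIV \<Longrightarrow> open (U n)" unfolding U_def by blast
    obtain C where "C \<subseteq> UNIV" and C: "finite C" "closure (numrange T) \<subseteq> (\<Union>c\<in>C. U c)"
      by (rule compactE_image[OF cpt opn cov])
    define N where "N = Max (insert 0 C)"
    have near: "\<forall>v\<in>numrange T. \<exists>u\<in>A m. dist v u \<le> \<epsilon>/2" if m: "m \<ge> N" for m
    proof
      fix v assume "v \<in> numrange T"
      then have "v \<in> closure (numrange T)" using closure_subset by blast
      then obtain c u where cu: "c \<in> C" "u \<in> A c" "dist u v < \<epsilon>/2" using C(2) unfolding U_def by auto
      have "c \<le> N" unfolding N_def using C(1) cu(1) by simp
      then have "u \<in> A m" using Amono[of c m] m cu(2) by auto
      then show "\<exists>u\<in>A m. dist v u \<le> \<epsilon>/2" using cu(3) by (metis dist_commute less_imp_le)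
    qed
    have "norm (hausdorff_dist (closure (A m)) (closure (numrange T)) - 0) < \<epsilon>" if m: "m \<ge> N" for m
    proof -
      have "\<forall>u\<in>A m. \<exists>v\<in>numrange T. dist u v \<le> \<epsilon>/2"
      proof
        fix u assume "u \<in> A m"
        then have "u \<in> numrange T" using AW by blast
        then show "\<exists>v\<in>numrange T. dist u v \<le> \<epsilon>/2" using e by (intro bexI[of _ u]) auto
      qed
      note h = hd_le[OF Ane numrange_ne[OF nt] this near[OF m]]
      have h1: "0 \<le> hausdorff_dist (closure (A m)) (closure (numrange T))" by (rule conjunct1[OF h])
      have h2: "hausdorff_dist (closure (A m)) (closure (numrange T)) \<le> \<epsilon>/2" by (rule conjunct2[OF h])
      show ?thesis using h1 h2 e by (simp only: diff_zero real_norm_def abs_of_nonneg[OF h1])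
    qed
    then show "\<exists>no. \<forall>n\<ge>no. norm (hausdorff_dist (closure (A n)) (closure (numrange T)) - 0) < \<epsilon>" by blast
  qed
  then show ?thesis using eq unfolding A_def by simp
qed


theorem lemma4p4:
  fixes dummy :: "'a::complex_hilbert_space"
  assumes nontriv: "\<exists>x::'a. x \<noteq> 0"
  shows
   "(\<forall>T S :: 'a \<Rightarrow> 'a. bounded_op T \<and> bounded_op S \<longrightarrow>
        hausdorff_dist (closure (numrange T)) (closure (numrange S)) \<le> onorm (\<lambda>x. T x - S x))
  \<and> (\<forall>(Hs :: nat \<Rightarrow> 'a set) (T :: 'a \<Rightarrow> 'a).
        (\<forall>n. closed_csubspace (Hs n) \<and> (\<exists>x\<in>Hs n. x \<noteq> 0) \<and> Hs n \<subseteq> Hs (Suc n))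
        \<and> closure (\<Union>n. Hs n) = UNIV \<and> bounded_op T \<longrightarrow>
        closure (numrange T) = closure (\<Union>n. numrange_on (Hs n) (\<lambda>x. proj_onto (Hs n) (T x)))
        \<and> (\<lambda>n. hausdorff_dist (closure (numrange_on (Hs n) (\<lambda>x. proj_onto (Hs n) (T x))))
                               (closure (numrange T))) \<longlonglongrightarrow> 0)
  \<and> (\<forall>T P Q :: 'a \<Rightarrow> 'a. bounded_op T \<and> orth_projection P \<and> orth_projection Q
        \<and> P \<noteq> (\<lambda>x. 0) \<and> Q \<noteq> (\<lambda>x. 0) \<and> onorm (\<lambda>x. P x - Q x) < 1 \<longrightarrow>
        hausdorff_dist (closure (numrange_on (range P) (\<lambda>x. P (T (P x)))))
                       (closure (numrange_on (range Q) (\<lambda>x. Q (T (Q x)))))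
          \<le> onorm T * onorm (\<lambda>x. P x - Q x) * (1 + 2 / (1 - onorm (\<lambda>x. P x - Q x))\<^sup>2))
  \<and> (\<forall>(T :: 'a \<Rightarrow> 'a) (Ps :: nat \<Rightarrow> 'a \<Rightarrow> 'a) P. bounded_op T
        \<and> (\<forall>n. orth_projection (Ps n) \<and> Ps n \<noteq> (\<lambda>x. 0)) \<and> orth_projection P \<and> P \<noteq> (\<lambda>x. 0)
        \<and> (\<lambda>n. onorm (\<lambda>x. Ps n x - P x)) \<longlonglongrightarrow> 0 \<longrightarrow>
        (\<lambda>n. hausdorff_dist (closure (numrange_on (range (Ps n)) (\<lambda>x. Ps n (T (Ps n x)))))
                             (closure (numrange_on (range P) (\<lambda>x. P (T (P x)))))) \<longlonglongrightarrow> 0)"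
proof (intro conjI allI impI)
  fix T S :: "'a \<Rightarrow> 'a" assume "bounded_op T \<and> bounded_op S"
  then show "hausdorff_dist (closure (numrange T)) (closure (numrange S)) \<le> onorm (\<lambda>x. T x - S x)"
    using part1[OF nontriv] by blast
next
  fix Hs :: "nat \<Rightarrow> 'a set" and T :: "'a \<Rightarrow> 'a"
  assume a: "(\<forall>n. closed_csubspace (Hs n) \<and> (\<exists>x\<in>Hs n. x \<noteq> 0) \<and> Hs n \<subseteq> Hs (Suc n)) \<and> closure (\<Union>n. Hs n) = UNIV \<and> bounded_op T"
  note p = part2[of Hs T] 
  show "closure (numrange T) = closure (\<Union>n. numrange_on (Hs n) (\<lambda>x. proj_onto (Hs n) (T x)))"
    using p a by blast
  show "(\<lambda>n. hausdorff_dist (closure (numrange_on (Hs n) (\<lambda>x. proj_onto (Hs n) (T x)))) (closure (numrange T))) \<longlonglongrightarrow> 0"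
    using p a by blast
next
  fix T P Q :: "'a \<Rightarrow> 'a"
  assume "bounded_op T \<and> orth_projection P \<and> orth_projection Q \<and> P \<noteq> (\<lambda>x. 0) \<and> Q \<noteq> (\<lambda>x. 0) \<and> onorm (\<lambda>x. P x - Q x) < 1"
  then show "hausdorff_dist (closure (numrange_on (range P) (\<lambda>x. P (T (P x))))) (closure (numrange_on (range Q) (\<lambda>x. Q (T (Q x)))))
          \<le> onorm T * onorm (\<lambda>x. P x - Q x) * (1 + 2 / (1 - onorm (\<lambda>x. P x - Q x))\<^sup>2)"
    using part3[of T P Q] by blast
next
  fix T :: "'a \<Rightarrow> 'a" and Ps :: "nat \<Rightarrow> 'a \<Rightarrow> 'a" and P
  assume "bounded_op T \<and> (\<forall>n. orth_projection (Ps n) \<and> Ps n \<noteq> (\<lambda>x. 0)) \<and> orth_projection P \<and> P \<noteq> (\<lambda>x. 0) \<and> (\<lambda>n. onorm (\<lambda>x. Ps n x - P x)) \<longlonglongrightarrow> 0"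
  then show "(\<lambda>n. hausdorff_dist (closure (numrange_on (range (Ps n)) (\<lambda>x. Ps n (T (Ps n x))))) (closure (numrange_on (range P) (\<lambda>x. P (T (P x)))))) \<longlonglongrightarrow> 0"
    using part4[of T Ps P] by blast
qed

end
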